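(* Let $D\colon \omega\to \omega^+$ be a function such that (i) $D$ is increasing (i.e., $m\le n$ implies $D(m)\le D(n)$), (ii) $D(0)=0$ or $D(0)=1$, and (iii) $D(2)>0$. Then there is a countably infinite total algebra $\mathbf{A}$ such that $d_{\mathbf{A}}(n)=D(n)$ for all $n\in\omega$.
   Context: $\omega=\{0,1,2,\dots\}$ and $\omega^+=\omega\cup\{\omega\}$, ordered naturally with $\omega$ largest. For an algebra $\mathbf{A}$ and $n\in\omega$, $d_{\mathbf{A}}(n)$ is the least size of a generating set of the direct power $\mathbf{A}^n$, with $d_{\mathbf{A}}(n)=\omega$ if $\mathbf{A}^n$ is not finitely generated ($\mathbf{A}^0$ is the one-element algebra). *)

theory Defs
  imports Main "HOL-Library.Extended_Nat"
begin

text \<open>An operation is a pair (arity k, function on argument lists); it is meant to be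
applied to lists of length k.\<close>

type_synonym 'a operation = "nat \<times> ('a list \<Rightarrow> 'a)"
type_synonym 'a algebra = "'a set \<times> 'a operation set"

definition total_algebra :: "'a algebra \<Rightarrow> bool" where
  "total_algebra Alg \<longleftrightarrow>
     (\<forall>(k, f) \<in> snd Alg. \<forall>xs. length xs = k \<and> set xs \<subseteq> fst Alg \<longrightarrow> f xs \<in> fst Alg)"

inductive_set Sg :: "'a operation set \<Rightarrow> 'a set \<Rightarrow> 'a set" for F X where
  gen: "x \<in> X \<Longrightarrow> x \<in> Sg F X"
| app: "(k, f) \<in> F \<Longrightarrow> length ys = k \<Longrightarrow> \<forall>y\<in>set ys. y \<in> Sg F X \<Longrightarrow> f ys \<in> Sg F X"

definition generates :: "'a algebra \<Rightarrow> 'a set \<Rightarrow> bool" where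
  "generates Alg X \<longleftrightarrow> X \<subseteq> fst Alg \<and> Sg (snd Alg) X = fst Alg"

text \<open>Direct power A^n: n-tuples (lists of length n) over the carrier, operations
applied coordinatewise. A^0 is the one-element algebra with carrier {[]}.\<close>
definition power_op :: "nat \<Rightarrow> 'a operation \<Rightarrow> 'a list operation" where
  "power_op n op = (fst op, \<lambda>ys. map (\<lambda>i. snd op (map (\<lambda>y. y ! i) ys)) [0..<n])"

definition direct_power :: "'a algebra \<Rightarrow> nat \<Rightarrow> 'a list algebra" where
  "direct_power Alg n =
     ({xs. length xs = n \<and> set xs \<subseteq> fst Alg}, power_op n ` snd Alg)"

definition gen_rank :: "'a algebra \<Rightarrow> enat" where
  "gen_rank Alg =
     (if \<exists>X. finite X \<and> generates Alg X
      then enat (LEAST m. \<exists>X. finite X \<and> card X = m \<and> generates Alg X)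
      else \<infinity>)"

definition d_fun :: "'a algebra \<Rightarrow> nat \<Rightarrow> enat" where
  "d_fun Alg n = gen_rank (direct_power Alg n)"

end

theory Submission
  imports Defs "HOL-Library.Nat_Bijection"
begin

definition bb :: "nat \<Rightarrow> nat \<Rightarrow> nat" where "bb j m = Suc (prod_encode (j, m))"

lemma bb_inj[simp]: "bb j m = bb j' m' \<longleftrightarrow> j = j' \<and> m = m'"
  unfolding bb_def by auto

lemma bb_nz[simp]: "bb j m \<noteq> 0"
  unfolding bb_def by auto

definition esc :: "nat \<Rightarrow> nat list \<Rightarrow> bool" where
  "esc j t \<longleftrightarrow> distinct t \<and> (\<forall>x\<in>set t. \<exists>m. x = bb j m)"

lemma esc_unique: "esc j t \<Longrightarrow> esc j' t \<Longrightarrow> t \<noteq> [] \<Longrightarrow> j = j'"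
  unfolding esc_def by (cases t) auto

definition Fgood :: "(nat \<Rightarrow> enat) \<Rightarrow> nat operation set" where
  "Fgood D = {(k,f). 0 < k \<and> (\<forall>L j. L \<noteq> [] \<longrightarrow> (\<forall>x\<in>set L. length x = k) \<longrightarrow>
      enat j < D (length L) \<longrightarrow> esc j (map f L) \<longrightarrow> (\<exists>p<k. esc j (map (\<lambda>x. x ! p) L)))}"

definition Fall :: "(nat \<Rightarrow> enat) \<Rightarrow> nat operation set" where
  "Fall D = Fgood D \<union> (if D 0 = 0 then {(0, \<lambda>_. 0)} else {})"

lemma Sg_len:
  assumes "X \<subseteq> {xs. length xs = n}"
  shows "Sg (power_op n ` F) X \<subseteq> {xs. length xs = n}"
proof
  fix x assume "x \<in> Sg (power_op n ` F) X"
  then show "x \<in> {xs. length xs = n}"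
    by induction (use assms in \<open>auto simp: power_op_def\<close>)
qed

lemma Sg_empty:
  assumes "\<forall>op\<in>F. 0 < fst op"
  shows "Sg F {} = {}"
proof -
  have False if "x \<in> Sg F {}" for x
    using that
  proof induction
    case (gen x) then show ?case by simp
  next
    case (app k f ys)
    then have "0 < k" using assms by force
    then have "ys \<noteq> []" using app by auto
    then show ?case using app by (cases ys) auto
  qed
  then show ?thesis by blast
qed

lemma lower:
  assumes n: "1 \<le> n" and fin: "finite X" and Xs: "X \<subseteq> {xs. length xs = n}"
    and lt: "enat (card X) < D n"
  shows "Sg (power_op n ` Fall D) X \<noteq> {xs. length xs = n}"
proof -
  define J where "J = {j. \<exists>x\<in>X. esc j x}"
  have "J \<subseteq> (\<lambda>x. THE j. esc j x) ` X"
  proof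
    fix j assume "j \<in> J"
    then obtain x where x: "x \<in> X" "esc j x" by (auto simp: J_def)
    have "x \<noteq> []" using x(1) Xs n by auto
    then have "(THE j. esc j x) = j" using x(2) esc_unique by blast
    then show "j \<in> (\<lambda>x. THE j. esc j x) ` X" using x(1) by force
  qed
  then have cJ: "card J \<le> card X" "finite J" using fin
    by (auto intro: card_image_le order_trans[OF card_mono] finite_subset)
  have "\<not> {0..card X} \<subseteq> J"
  proof
    assume "{0..card X} \<subseteq> J"
    then have "card {0..card X} \<le> card J" by (rule card_mono[OF cJ(2)])
    then have "Suc (card X) \<le> card J" by simp
    then show False using cJ by simp
  qed
  then obtain j where j0: "j \<in> {0..card X}" "j \<notin> J" by blast
  then have j: "j \<le> card X" "j \<notin> J" by auto
  have jD: "enat j < D n" using j(1) lt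
    by (meson enat_ord_simps(1) le_less_trans)
  have noesc: "\<forall>x\<in>X. \<not> esc j x" using j(2) by (auto simp: J_def)
  have inv: "length y = n \<and> \<not> esc j y" if "y \<in> Sg (power_op n ` Fall D) X" for y
    using that
  proof induction
    case (gen x) then show ?case using noesc Xs by auto
  next
    case (app k g ys)
    from app.hyps(1) obtain op where op: "op \<in> Fall D" "(k,g) = power_op n op" by auto
    obtain k0 f where opf: "op = (k0, f)" by (cases op)
    have kk: "k0 = k" and gg: "g = (\<lambda>ys. map (\<lambda>i. f (map (\<lambda>y. y ! i) ys)) [0..<n])"
      using op(2) opf by (auto simp: power_op_def)
    have len: "length (g ys) = n" by (simp add: gg)
    have "\<not> esc j (g ys)"
    proof
      assume E: "esc j (g ys)"
      show False
      proof (cases "op \<in> Fgood D")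
        case True
        then have P: "\<And>L j. L \<noteq> [] \<Longrightarrow> (\<forall>x\<in>set L. length x = k) \<Longrightarrow>
           enat j < D (length L) \<Longrightarrow> esc j (map f L) \<Longrightarrow> (\<exists>p<k. esc j (map (\<lambda>x. x ! p) L))"
          unfolding Fgood_def opf kk by auto
        define L where "L = map (\<lambda>i. map (\<lambda>y. y ! i) ys) [0..<n]"
        have L1: "L \<noteq> []" using n by (simp add: L_def)
        have L2: "\<forall>x\<in>set L. length x = k" using app.hyps(2) by (auto simp: L_def)
        have L3: "length L = n" by (simp add: L_def)
        have L4: "map f L = g ys" by (simp add: L_def gg)
        obtain p where p: "p < k" "esc j (map (\<lambda>x. x ! p) L)"
          using P[OF L1 L2] L3 L4 jD E by auto
        have ysp: "ys ! p \<in> set ys" using p(1) app.hyps(2) by simp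
        then have ih: "length (ys ! p) = n \<and> \<not> esc j (ys ! p)" using app.IH by blast
        have "map (\<lambda>x. x ! p) L = ys ! p"
          by (rule nth_equalityI) (use ih p(1) app.hyps(2) in \<open>auto simp: L_def\<close>)
        then show False using p(2) ih by simp
      next
        case False
        then have "op = (0, \<lambda>_. 0)" using op(1) by (auto simp: Fall_def split: if_splits)
        then have "g ys = map (\<lambda>i. 0) [0..<n]" using opf gg by auto
        then have "0 \<in> set (g ys)" using n by (auto intro: image_eqI[of _ _ 0])
        then show False using E by (auto simp: esc_def)
      qed
    qed
    with len show ?case by simp
  qed
  define t where "t = map (bb j) [0..<n]"
  have "length t = n" by (simp add: t_def)
  moreover have "esc j t" unfolding t_def esc_def
    by (auto simp: distinct_map inj_on_def)
  ultimately show ?thesis using inv by blast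
qed

lemma upper:
  assumes mono: "\<And>m n. m \<le> n \<Longrightarrow> D m \<le> D n" and n: "1 \<le> n" and Dn: "D n = enat k"
    and k: "1 \<le> k"
  shows "\<exists>X. finite X \<and> card X = k \<and> X \<subseteq> {xs. length xs = n} \<and>
           Sg (power_op n ` Fall D) X = {xs. length xs = n}"
proof -
  define col where "col p = map (\<lambda>i. bb p i) [0..<n]" for p
  define row where "row i = map (\<lambda>p. bb p i) [0..<k]" for i
  define X where "X = col ` {..<k}"
  have inj_col: "inj_on col {..<k}"
  proof (rule inj_onI)
    fix p p' assume "col p = col p'"
    then have "col p ! 0 = col p' ! 0" by simp
    then show "p = p'" using n by (simp add: col_def)
  qed
  have cardX: "card X = k" by (simp add: X_def card_image[OF inj_col])
  have XS: "X \<subseteq> {xs. length xs = n}" by (auto simp: X_def col_def)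
  have row_inj: "i = i'" if "row i = row i'" for i i'
  proof -
    have "row i ! 0 = row i' ! 0" using that by simp
    then show ?thesis using k by (simp add: row_def)
  qed
  have "{xs. length xs = n} \<subseteq> Sg (power_op n ` Fall D) X"
  proof
    fix a :: "nat list" assume a: "a \<in> {xs. length xs = n}"
    define f where "f xs = (if \<exists>i<n. xs = row i then a ! (THE i. i < n \<and> xs = row i) else 0)" for xs
    have frow: "f (row i) = a ! i" if "i < n" for i
    proof -
      have "(THE i'. i' < n \<and> row i = row i') = i"
        using that row_inj by (intro the_equality) auto
      then show ?thesis using that unfolding f_def by auto
    qed
    have fin: "(k, f) \<in> Fgood D"
      unfolding Fgood_def
    proof (clarsimp, intro conjI allI impI)
      show "0 < k" using k by simp
      fix L j assume L: "L \<noteq> []" "\<forall>x\<in>set L. length x = k" "enat j < D (length L)"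
        "esc j (map f L)"
      have rows: "\<exists>i<n. x = row i" if "x \<in> set L" for x
      proof (rule ccontr)
        assume "\<not> (\<exists>i<n. x = row i)"
        then have "f x = 0" by (auto simp: f_def)
        moreover have "f x \<in> set (map f L)" using that by simp
        ultimately show False using L(4) by (auto simp: esc_def)
      qed
      have dL: "distinct L" using L(4) by (auto simp: esc_def distinct_map)
      have "set L \<subseteq> row ` {..<n}" using rows by auto
      then have "card (set L) \<le> card (row ` {..<n})" by (simp add: card_mono)
      also have "\<dots> \<le> n" using card_image_le[of "{..<n}" row] by simp
      finally have "length L \<le> n" using dL distinct_card by metis
      then have "D (length L) \<le> enat k" using mono Dn by metis
      then have jk: "j < k" using L(3) by (metis enat_ord_simps(2) order_less_le_trans)
      have rj: "row i ! j = bb j i" for i using jk by (simp add: row_def)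
      have "esc j (map (\<lambda>x. x ! j) L)"
        unfolding esc_def
      proof (intro conjI ballI)
        show "distinct (map (\<lambda>x. x ! j) L)"
          unfolding distinct_map
        proof (intro conjI inj_onI dL)
          fix x y assume xy: "x \<in> set L" "y \<in> set L" "x ! j = y ! j"
          obtain i where i: "x = row i" using rows xy(1) by blast
          obtain i' where i': "y = row i'" using rows xy(2) by blast
          show "x = y" using xy(3) i i' rj by simp
        qed
        fix z assume "z \<in> set (map (\<lambda>x. x ! j) L)"
        then obtain x where "x \<in> set L" "z = x ! j" by auto
        then show "\<exists>m. z = bb j m" using rows rj by blast
      qed
      then show "\<exists>p<k. esc j (map (\<lambda>x. x ! p) L)" using jk by blast
    qed
    have opin: "(k, \<lambda>ys. map (\<lambda>i. f (map (\<lambda>y. y ! i) ys)) [0..<n]) \<in> power_op n ` Fall D"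
      using fin by (force simp: Fall_def power_op_def)
    define ys where "ys = map col [0..<k]"
    have ysl: "length ys = k" by (simp add: ys_def)
    have ysin: "\<forall>y\<in>set ys. y \<in> Sg (power_op n ` Fall D) X"
      by (auto simp: ys_def X_def intro: Sg.gen)
    have "map (\<lambda>y. y ! i) ys = row i" if "i < n" for i
      using that by (simp add: ys_def row_def col_def)
    then have "map (\<lambda>i. f (map (\<lambda>y. y ! i) ys)) [0..<n] = a"
      using a frow by (auto intro: nth_equalityI)
    then show "a \<in> Sg (power_op n ` Fall D) X"
      using Sg.app[OF opin ysl ysin] by simp
  qed
  with Sg_len[OF XS] have "Sg (power_op n ` Fall D) X = {xs. length xs = n}" by blast
  then show ?thesis using cardX XS by (auto simp: X_def)
qed

lemma gen_rank_eq:
  assumes low: "\<And>X. finite X \<Longrightarrow> generates Alg X \<Longrightarrow> D \<le> enat (card X)"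
    and up: "\<And>k. D = enat k \<Longrightarrow> \<exists>X. finite X \<and> card X = k \<and> generates Alg X"
  shows "gen_rank Alg = D"
proof (cases D)
  case (enat k)
  then obtain X where X: "finite X" "card X = k" "generates Alg X" using up by blast
  have "(LEAST m. \<exists>X. finite X \<and> card X = m \<and> generates Alg X) = k"
  proof (rule Least_equality)
    show "\<exists>X. finite X \<and> card X = k \<and> generates Alg X" using X by blast
    fix m assume "\<exists>X. finite X \<and> card X = m \<and> generates Alg X"
    then obtain Y where "finite Y" "card Y = m" "generates Alg Y" by blast
    then show "k \<le> m" using low[of Y] enat by simp
  qed
  then show ?thesis using X enat by (auto simp: gen_rank_def)
next
  case infinity
  then have "\<not>(\<exists>X. finite X \<and> generates Alg X)" using low by force
  then show ?thesis using infinity by (simp add: gen_rank_def)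
qed

theorem theorem3p4:
  fixes D :: "nat \<Rightarrow> enat"
  assumes "\<And>m n. m \<le> n \<Longrightarrow> D m \<le> D n"
    and "D 0 = 0 \<or> D 0 = 1"
    and "D 2 > 0"
  shows "\<exists>(A :: nat set) F. infinite A \<and> total_algebra (A, F) \<and>
           (\<forall>n. d_fun (A, F) n = D n)"
proof -
  let ?F = "Fall D"
  have tot: "total_algebra (UNIV, ?F)" by (simp add: total_algebra_def)
  have dp: "direct_power (UNIV, ?F) n = ({xs. length xs = n}, power_op n ` ?F)" for n
    by (simp add: direct_power_def)
  have main: "d_fun (UNIV, ?F) n = D n" for n
  proof -
    have gen_iff: "generates (direct_power (UNIV,?F) n) X \<longleftrightarrow>
        X \<subseteq> {xs. length xs = n} \<and> Sg (power_op n ` ?F) X = {xs. length xs = n}" for X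
      by (simp add: generates_def dp)
    show ?thesis unfolding d_fun_def
    proof (rule gen_rank_eq)
      fix X assume fX: "finite X" and g: "generates (direct_power (UNIV, ?F) n) X"
      show "D n \<le> enat (card X)"
      proof (cases "n = 0")
        case True
        show ?thesis
        proof (cases "D 0 = 0")
          case True with \<open>n = 0\<close> show ?thesis by simp
        next
          case False
          then have D1: "D 0 = 1" using assms(2) by simp
          have "X \<noteq> {}"
          proof
            assume "X = {}"
            have "\<forall>op\<in>power_op 0 ` ?F. 0 < fst op"
              using False by (auto simp: Fall_def Fgood_def power_op_def)
            then have "Sg (power_op 0 ` ?F) {} = {}" by (rule Sg_empty)
            then show False using g \<open>X = {}\<close> \<open>n = 0\<close> gen_iff by auto
          qed
          then have "1 \<le> card X" using fX by (simp add: Suc_le_eq card_gt_0_iff)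
          then show ?thesis using D1 \<open>n = 0\<close> by (simp add: one_enat_def)
        qed
      next
        case False
        show ?thesis
        proof (rule ccontr)
          assume "\<not> D n \<le> enat (card X)"
          then have "enat (card X) < D n" by simp
          moreover have "X \<subseteq> {xs. length xs = n}" "Sg (power_op n ` ?F) X = {xs. length xs = n}"
            using g gen_iff by auto
          moreover have "1 \<le> n" using False by simp
          ultimately show False using lower[of n X D] fX by blast
        qed
      qed
    next
      fix k assume Dn: "D n = enat k"
      show "\<exists>X. finite X \<and> card X = k \<and> generates (direct_power (UNIV, ?F) n) X"
      proof (cases "n = 0")
        case True
        have c0: "{xs :: nat list. length xs = 0} = {[]}" by auto
        show ?thesis
        proof (cases "k = 0")
          case True
          then have D0: "D 0 = 0" using Dn \<open>n = 0\<close> by (simp add: zero_enat_def)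
          have op: "(0, \<lambda>ys. map (\<lambda>i. 0::nat) [0..<0]) \<in> power_op 0 ` ?F"
            using D0 by (force simp: Fall_def power_op_def)
          have "[] \<in> Sg (power_op 0 ` ?F) {}"
            using Sg.app[OF op, of "[]"] by simp
          moreover have "Sg (power_op 0 ` ?F) {} \<subseteq> {xs. length xs = 0}" by (rule Sg_len) simp
          ultimately have "Sg (power_op 0 ` ?F) {} = {xs. length xs = 0}" using c0 by blast
          then show ?thesis using gen_iff True \<open>n = 0\<close> by (intro exI[of _ "{}"]) auto
        next
          case False
          then have "k = 1" using Dn \<open>n = 0\<close> assms(2) by (auto simp: zero_enat_def one_enat_def)
          have "[] \<in> Sg (power_op 0 ` ?F) {[]}" by (rule Sg.gen) simp
          moreover have "Sg (power_op 0 ` ?F) {[]} \<subseteq> {xs. length xs = 0}" by (rule Sg_len) simp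
          ultimately have "Sg (power_op 0 ` ?F) {[]} = {xs. length xs = 0}" using c0 by blast
          then show ?thesis using gen_iff \<open>k = 1\<close> \<open>n = 0\<close> by (intro exI[of _ "{[]}"]) auto
        qed
      next
        case False
        show ?thesis
        proof (cases "k = 0")
          case False
          have "1 \<le> n" "1 \<le> k" using False \<open>n \<noteq> 0\<close> by auto
          from upper[of D n k, OF assms(1) this(1) Dn this(2)] gen_iff show ?thesis by auto
        next
          case True
          have n1: "n = 1"
          proof (rule ccontr)
            assume "n \<noteq> 1"
            then have "2 \<le> n" using \<open>n \<noteq> 0\<close> by simp
            then have "D 2 \<le> D n" by (rule assms(1))
            then show False using assms(3) Dn True by (simp add: zero_enat_def)
          qed
          have D1: "D 1 = 0" using Dn True n1 by (simp add: zero_enat_def)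
          have D0: "D 0 = 0" using assms(1)[of 0 1] D1 by simp
          have op0: "(0, \<lambda>ys. map (\<lambda>i. 0::nat) [0..<1]) \<in> power_op 1 ` ?F"
            using D0 by (force simp: Fall_def power_op_def)
          have z: "[0] \<in> Sg (power_op 1 ` ?F) {}"
            using Sg.app[OF op0, of "[]"] by simp
          have "{xs. length xs = 1} \<subseteq> Sg (power_op 1 ` ?F) {}"
          proof
            fix xs :: "nat list" assume "xs \<in> {xs. length xs = 1}"
            then obtain a where a: "xs = [a]" by (auto simp: length_Suc_conv)
            have aux: "False" if L: "L \<noteq> []" "enat j < D (length L)" "esc j (map (\<lambda>_. a) L)"
              for L :: "nat list list" and j
            proof -
              have "distinct (map (\<lambda>_. a) L)" using L(3) by (simp add: esc_def)
              then have "length L = 1" using L(1)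
                by (cases L; cases "tl L") auto
              then show False using L(2) D1 by simp
            qed
            have "(1, \<lambda>_. a) \<in> Fgood D"
              unfolding Fgood_def using aux by auto
            then have op1: "(1, \<lambda>ys. map (\<lambda>i. a) [0..<1]) \<in> power_op 1 ` ?F"
              by (force simp: Fall_def power_op_def)
            show "xs \<in> Sg (power_op 1 ` ?F) {}"
              using Sg.app[OF op1, of "[[0]]"] z a by simp
          qed
          moreover have "Sg (power_op 1 ` ?F) {} \<subseteq> {xs. length xs = 1}" by (rule Sg_len) simp
          ultimately have "Sg (power_op 1 ` ?F) {} = {xs. length xs = 1}" by blast
          then show ?thesis using gen_iff True n1 by (intro exI[of _ "{}"]) auto
        qed
      qed
    qed
  qed
  show ?thesis
    by (intro exI[of _ "UNIV :: nat set"] exI[of _ "Fall D"]) (use tot main in auto)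
qed

end
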